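(* Let $a>0$. For any finite $\Lambda\subset\mathbb Z^2$ and any $i\in\Lambda$, $$\mu^0_\Lambda(|h_i|\le a)\ge\frac{a}{4\langle|h_i|\rangle^0_\Lambda}\wedge\frac12.$$
   Context: Fix an integer $r\ge1$. For each $k\in\mathbb Z^2$ let $\Psi_k:\mathbb R\to\mathbb R$ satisfy: $\Psi_k\equiv0$ if $\|k\|_1>r$; $\Psi_k=\Psi_{-k}$ and $\Psi_k(x)=\Psi_k(-x)$; $\Psi_k$ is $C^2$; $\Psi_k''\ge0$, and there is $c>0$ such that the translation-invariant random walk on $\mathbb Z^2$ with jump rates $P_c(0,j)=1$ if $\Psi_j''(h)\ge c$ for all $h$ and $0$ otherwise is irreducible. For finite $\Lambda\subset\mathbb Z^2$ and $b\in\mathbb R$, $$\mu^b_\Lambda(d\underline h)=\frac1{Z^b_\Lambda}\exp\Big\{-\sum_{\langle ij\rangle\cap\Lambda\neq\emptyset}\Psi_{j-i}(h_i-h_j)\Big\}\prod_{i\in\Lambda}dh_i\prod_{i\notin\Lambda}\delta_b(dh_i),$$ the sum being over pairs of distinct sites with $\|j-i\|_\infty\le r$ meeting $\Lambda$; $\langle\cdot\rangle^b_\Lambda$ denotes expectation; $x\wedge y=\min(x,y)$. *)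

theory Defs
  imports "HOL-Analysis.Analysis"
begin

type_synonym site = "int \<times> int"

definition site_diff :: "site \<Rightarrow> site \<Rightarrow> site" where
  "site_diff j i = (fst j - fst i, snd j - snd i)"

definition site_neg :: "site \<Rightarrow> site" where
  "site_neg k = (- fst k, - snd k)"

definition norm1 :: "site \<Rightarrow> int" where
  "norm1 k = \<bar>fst k\<bar> + \<bar>snd k\<bar>"

definition norminf :: "site \<Rightarrow> int" where
  "norminf k = max \<bar>fst k\<bar> \<bar>snd k\<bar>"

definition admissible_potential :: "nat \<Rightarrow> (site \<Rightarrow> real \<Rightarrow> real) \<Rightarrow> bool" where
  "admissible_potential r \<Psi> \<longleftrightarrow>
     (\<forall>k x. norm1 k > int r \<longrightarrow> \<Psi> k x = 0) \<and>
     (\<forall>k. \<Psi> k = \<Psi> (site_neg k)) \<and>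
     (\<forall>k x. \<Psi> k x = \<Psi> k (- x)) \<and>
     (\<forall>k x. \<Psi> k differentiable at x) \<and>
     (\<forall>k x. deriv (\<Psi> k) differentiable at x) \<and>
     (\<forall>k. continuous_on UNIV (deriv (deriv (\<Psi> k)))) \<and>
     (\<forall>k x. deriv (deriv (\<Psi> k)) x \<ge> 0) \<and>
     (\<exists>c>0. \<forall>x y. (x, y) \<in> {(u, v). \<forall>h. deriv (deriv (\<Psi> (site_diff v u))) h \<ge> c}\<^sup>*)"

definition ext_conf :: "site set \<Rightarrow> real \<Rightarrow> (site \<Rightarrow> real) \<Rightarrow> site \<Rightarrow> real" where
  "ext_conf \<Lambda> b h i = (if i \<in> \<Lambda> then h i else b)"

text \<open>Pairs \<open>\<langle>ij\<rangle>\<close> of distinct sites within sup-distance r meeting \<open>\<Lambda>\<close>; the sum over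
  unordered pairs is written as one half of the sum over ordered pairs (the summand is
  symmetric by the standing assumptions).\<close>
definition pairs :: "nat \<Rightarrow> site set \<Rightarrow> (site \<times> site) set" where
  "pairs r \<Lambda> = {(i, j). i \<noteq> j \<and> norminf (site_diff j i) \<le> int r \<and> (i \<in> \<Lambda> \<or> j \<in> \<Lambda>)}"

definition hamiltonian :: "nat \<Rightarrow> (site \<Rightarrow> real \<Rightarrow> real) \<Rightarrow> site set \<Rightarrow> real \<Rightarrow> (site \<Rightarrow> real) \<Rightarrow> real" where
  "hamiltonian r \<Psi> \<Lambda> b h =
     (1/2) * (\<Sum>(i, j) \<in> pairs r \<Lambda>. \<Psi> (site_diff j i) (ext_conf \<Lambda> b h i - ext_conf \<Lambda> b h j))"

definition ref_measure :: "site set \<Rightarrow> (site \<Rightarrow> real) measure" where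
  "ref_measure \<Lambda> = PiM \<Lambda> (\<lambda>_. lborel)"

definition partition_fn :: "nat \<Rightarrow> (site \<Rightarrow> real \<Rightarrow> real) \<Rightarrow> site set \<Rightarrow> real \<Rightarrow> real" where
  "partition_fn r \<Psi> \<Lambda> b = (\<integral>h. exp (- hamiltonian r \<Psi> \<Lambda> b h) \<partial>ref_measure \<Lambda>)"

definition gibbs :: "nat \<Rightarrow> (site \<Rightarrow> real \<Rightarrow> real) \<Rightarrow> site set \<Rightarrow> real \<Rightarrow> (site \<Rightarrow> real) measure" where
  "gibbs r \<Psi> \<Lambda> b = density (ref_measure \<Lambda>)
     (\<lambda>h. ennreal (exp (- hamiltonian r \<Psi> \<Lambda> b h) / partition_fn r \<Psi> \<Lambda> b))"

end

theory Submission
  imports Defs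
begin


lemma layer_cake:
  fixes f :: "real \<Rightarrow> real"
  assumes [measurable]: "f \<in> borel_measurable borel" and nn: "\<And>x. 0 \<le> f x"
  shows "(\<integral>\<^sup>+x. ennreal (f x) \<partial>lborel) =
         (\<integral>\<^sup>+t. indicator {0<..} t * emeasure lborel {x. t < f x} \<partial>lborel)"
proof -
  have "(\<integral>\<^sup>+x. ennreal (f x) \<partial>lborel) =
        (\<integral>\<^sup>+x. (\<integral>\<^sup>+t. indicator {0<..} t * indicator {x. t < f x} x \<partial>lborel) \<partial>lborel)"
  proof (rule nn_integral_cong)
    fix x
    have "(\<integral>\<^sup>+t. indicator {0<..} t * indicator {x. t < f x} x \<partial>lborel)
        = (\<integral>\<^sup>+t. indicator {0<..<f x} t \<partial>lborel)"
      by (rule nn_integral_cong) (auto simp: indicator_def)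
    also have "\<dots> = ennreal (f x)" using nn[of x] by simp
    finally show "ennreal (f x) = (\<integral>\<^sup>+t. indicator {0<..} t * indicator {x. t < f x} x \<partial>lborel)" by simp
  qed
  also have "\<dots> = (\<integral>\<^sup>+t. (\<integral>\<^sup>+x. indicator {0<..} t * indicator {x. t < f x} x \<partial>lborel) \<partial>lborel)"
  proof -
    have m: "(\<lambda>(x,t). indicator {0<..} t * indicator {x. t < f x} x :: ennreal)
         \<in> borel_measurable (lborel \<Otimes>\<^sub>M lborel)"
    proof -
      have "(\<lambda>(x,t). indicator {0<..} t * indicator {x. t < f x} x :: ennreal)
           = (\<lambda>p. if 0 < snd p \<and> snd p < f (fst p) then 1 else 0)"
        by (auto simp: indicator_def fun_eq_iff)
      moreover have "(\<lambda>p::real\<times>real. if 0 < snd p \<and> snd p < f (fst p) then 1 else 0 :: ennreal) \<in> borel_measurable (lborel \<Otimes>\<^sub>M lborel)"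
        by measurable
      ultimately show ?thesis by simp
    qed
    show ?thesis using lborel_pair.Fubini'[OF m] by simp
  qed
  also have "\<dots> = (\<integral>\<^sup>+t. indicator {0<..} t * emeasure lborel {x. t < f x} \<partial>lborel)"
  proof (rule nn_integral_cong)
    fix t :: real
    have s: "{x. t < f x} \<in> sets lborel" by measurable
    show "(\<integral>\<^sup>+x. indicator {0<..} t * indicator {x. t < f x} x \<partial>lborel) =
          indicator {0<..} t * emeasure lborel {x. t < f x}"
      by (subst nn_integral_cmult) (use s in auto)
  qed
  finally show ?thesis .
qed


lemma conv_interval:
  fixes A :: "real set"
  assumes ne: "A \<noteq> {}" and ba: "bdd_above A" and bb: "bdd_below A" and cv: "convex A"
  shows "{Inf A<..<Sup A} \<subseteq> A" "A \<subseteq> {Inf A..Sup A}" "Inf A \<le> Sup A"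
    "Inf A = Sup A \<Longrightarrow> Inf A \<in> A"
proof -
  have iv: "\<And>a b x. a \<in> A \<Longrightarrow> b \<in> A \<Longrightarrow> a \<le> x \<Longrightarrow> x \<le> b \<Longrightarrow> x \<in> A"
  proof -
    fix a b x assume "a \<in> A" "b \<in> A" "a \<le> x" "x \<le> b"
    moreover have "is_interval A" using cv by (simp add: is_interval_convex_1)
    ultimately show "x \<in> A" unfolding is_interval_1 by blast
  qed
  show "{Inf A<..<Sup A} \<subseteq> A"
  proof
    fix x assume "x \<in> {Inf A<..<Sup A}"
    then have x: "Inf A < x" "x < Sup A" by auto
    obtain a where "a \<in> A" "a < x" using cInf_lessD[OF ne x(1)] by blast
    moreover obtain b where "b \<in> A" "x < b" using less_cSupD[OF ne x(2)] by blast
    ultimately show "x \<in> A" using iv[of a b x] by simp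
  qed
  show sub: "A \<subseteq> {Inf A..Sup A}"
  proof
    fix x assume "x \<in> A"
    then show "x \<in> {Inf A..Sup A}" using cInf_lower[OF _ bb] cSup_upper[OF _ ba] by simp
  qed
  obtain y where y: "y \<in> A" using ne by blast
  then show "Inf A \<le> Sup A" using sub by force
  assume "Inf A = Sup A"
  then have "y = Inf A" using y sub by force
  then show "Inf A \<in> A" using y by simp
qed

lemma levelset_BM:
  fixes A B C :: "real set" and l :: real
  assumes A: "A \<noteq> {}" "bdd_above A" "bdd_below A" "convex A"
    and B: "B \<noteq> {}" "bdd_above B" "bdd_below B" "convex B"
    and l: "0 < l" "l < 1"
    and C: "\<And>a b. a \<in> A \<Longrightarrow> b \<in> B \<Longrightarrow> l * a + (1 - l) * b \<in> C" "C \<in> sets lborel"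
  shows "ennreal l * emeasure lborel A + ennreal (1 - l) * emeasure lborel B \<le> emeasure lborel C"
proof -
  define \<alpha> where "\<alpha> = Inf A" define \<alpha>' where "\<alpha>' = Sup A"
  define \<beta> where "\<beta> = Inf B" define \<beta>' where "\<beta>' = Sup B"
  note cA = conv_interval[OF A, folded \<alpha>_def \<alpha>'_def]
  note cB = conv_interval[OF B, folded \<beta>_def \<beta>'_def]
  have sub: "{l * \<alpha> + (1 - l) * \<beta> <..< l * \<alpha>' + (1 - l) * \<beta>'} \<subseteq> C"
  proof
    fix p assume p: "p \<in> {l * \<alpha> + (1 - l) * \<beta> <..< l * \<alpha>' + (1 - l) * \<beta>'}"
    define D where "D = l * (\<alpha>' - \<alpha>) + (1 - l) * (\<beta>' - \<beta>)"
    have Dpos: "D > 0" using p by (simp add: D_def algebra_simps)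
    define s where "s = (p - (l * \<alpha> + (1 - l) * \<beta>)) / D"
    have num: "0 < p - (l * \<alpha> + (1 - l) * \<beta>)" "p - (l * \<alpha> + (1 - l) * \<beta>) < D"
      using p by (auto simp: D_def algebra_simps)
    have s: "0 < s" "s < 1" using num Dpos unfolding s_def by (auto intro: divide_pos_pos)
    define a where "a = \<alpha> + s * (\<alpha>' - \<alpha>)"
    define b where "b = \<beta> + s * (\<beta>' - \<beta>)"
    have "l * a + (1 - l) * b = l * \<alpha> + (1 - l) * \<beta> + s * D"
      by (simp add: a_def b_def D_def algebra_simps)
    also have "\<dots> = p" using Dpos by (simp add: s_def)
    finally have eq: "l * a + (1 - l) * b = p" .
    have "a \<in> A"
    proof (cases "\<alpha> < \<alpha>'")
      case True
      then have "0 < s * (\<alpha>' - \<alpha>)" "s * (\<alpha>' - \<alpha>) < 1 * (\<alpha>' - \<alpha>)" using s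
        by (auto intro: mult_pos_pos mult_strict_right_mono)
      then have "a \<in> {\<alpha><..<\<alpha>'}" by (auto simp: a_def)
      then show ?thesis using cA(1) by auto
    next
      case False
      then have "\<alpha> = \<alpha>'" using cA(3) by simp
      then show ?thesis using cA(4) by (simp add: a_def)
    qed
    moreover have "b \<in> B"
    proof (cases "\<beta> < \<beta>'")
      case True
      then have "0 < s * (\<beta>' - \<beta>)" "s * (\<beta>' - \<beta>) < 1 * (\<beta>' - \<beta>)" using s
        by (auto intro: mult_pos_pos mult_strict_right_mono)
      then have "b \<in> {\<beta><..<\<beta>'}" by (auto simp: b_def)
      then show ?thesis using cB(1) by auto
    next
      case False
      then have "\<beta> = \<beta>'" using cB(3) by simp
      then show ?thesis using cB(4) by (simp add: b_def)
    qed
    ultimately show "p \<in> C" using C(1) eq by blast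
  qed
  have "ennreal l * emeasure lborel A + ennreal (1 - l) * emeasure lborel B
      \<le> ennreal l * ennreal (\<alpha>' - \<alpha>) + ennreal (1 - l) * ennreal (\<beta>' - \<beta>)"
  proof (intro add_mono mult_left_mono)
    have "emeasure lborel A \<le> emeasure lborel {\<alpha>..\<alpha>'}" using cA(2) by (intro emeasure_mono) auto
    then show "emeasure lborel A \<le> ennreal (\<alpha>' - \<alpha>)" using cA(3) by simp
    have "emeasure lborel B \<le> emeasure lborel {\<beta>..\<beta>'}" using cB(2) by (intro emeasure_mono) auto
    then show "emeasure lborel B \<le> ennreal (\<beta>' - \<beta>)" using cB(3) by simp
  qed auto
  also have "\<dots> = ennreal (l * (\<alpha>' - \<alpha>) + (1 - l) * (\<beta>' - \<beta>))"
    using l cA(3) cB(3) by (simp add: ennreal_mult[symmetric] ennreal_plus[symmetric] del: ennreal_plus)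
  also have "\<dots> = emeasure lborel {l * \<alpha> + (1 - l) * \<beta> <..< l * \<alpha>' + (1 - l) * \<beta>'}"
  proof -
    have le: "l * \<alpha> + (1 - l) * \<beta> \<le> l * \<alpha>' + (1 - l) * \<beta>'"
      using l cA(3) cB(3) by (intro add_mono mult_left_mono) auto
    show ?thesis unfolding emeasure_lborel_Ioo[OF le] by (simp add: algebra_simps)
  qed
  also have "\<dots> \<le> emeasure lborel C" using sub C(2) by (rule emeasure_mono)
  finally show ?thesis .
qed


lemma meas_level:
  fixes f :: "real \<Rightarrow> real"
  assumes [measurable]: "f \<in> borel_measurable borel"
  shows "(\<lambda>t. emeasure lborel {x. t < f x}) \<in> borel_measurable borel"
proof -
  have "(\<lambda>t. emeasure lborel {x. t < f x}) = (\<lambda>t. \<integral>\<^sup>+x. (if t < f x then 1 else 0) \<partial>lborel)"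
  proof
    fix t
    have s: "{x. t < f x} \<in> sets lborel" by measurable
    show "emeasure lborel {x. t < f x} = (\<integral>\<^sup>+x. (if t < f x then 1 else 0) \<partial>lborel)"
      using nn_integral_indicator[OF s] by (simp add: indicator_def of_bool_def)
  qed
  also have "\<dots> \<in> borel_measurable borel" by measurable
  finally show ?thesis .
qed

lemma pl_core:
  fixes f g h :: "real \<Rightarrow> real" and l n :: real
  assumes mf[measurable]: "f \<in> borel_measurable borel" and mg[measurable]: "g \<in> borel_measurable borel"
    and mh[measurable]: "h \<in> borel_measurable borel"
    and nnf: "\<And>x. 0 \<le> f x" and nng: "\<And>x. 0 \<le> g x" and nnh: "\<And>x. 0 \<le> h x"
    and f1: "\<And>x. f x \<le> 1" and g1: "\<And>x. g x \<le> 1"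
    and fs: "\<And>t. t < 1 \<Longrightarrow> \<exists>x. t < f x" and gs: "\<And>t. t < 1 \<Longrightarrow> \<exists>x. t < g x"
    and fz: "\<And>x. n < \<bar>x\<bar> \<Longrightarrow> f x = 0" and gz: "\<And>x. n < \<bar>x\<bar> \<Longrightarrow> g x = 0"
    and fc: "\<And>t. 0 < t \<Longrightarrow> convex {x. t < f x}" and gc: "\<And>t. 0 < t \<Longrightarrow> convex {x. t < g x}"
    and l: "0 < l" "l < 1"
    and hyp: "\<And>a b t. 0 < t \<Longrightarrow> t < f a \<Longrightarrow> t < g b \<Longrightarrow> t < h (l * a + (1 - l) * b)"
  shows "ennreal l * (\<integral>\<^sup>+x. f x \<partial>lborel) + ennreal (1 - l) * (\<integral>\<^sup>+x. g x \<partial>lborel)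
         \<le> (\<integral>\<^sup>+x. h x \<partial>lborel)"
proof -
  have [measurable]: "(\<lambda>t. emeasure lborel {x. t < f x}) \<in> borel_measurable borel"
    "(\<lambda>t. emeasure lborel {x. t < g x}) \<in> borel_measurable borel"
    "(\<lambda>t. emeasure lborel {x. t < h x}) \<in> borel_measurable borel"
    by (simp_all add: meas_level)
  have cut: "(\<integral>\<^sup>+x. ennreal (k x) \<partial>lborel) =
      (\<integral>\<^sup>+t. indicator {0<..<1} t * emeasure lborel {x. t < k x} \<partial>lborel)"
    if [measurable]: "k \<in> borel_measurable borel" and nn: "\<And>x. 0 \<le> k x" and k1: "\<And>x. k x \<le> 1" for k :: "real \<Rightarrow> real"
    unfolding layer_cake[OF that(1) nn]
  proof (rule nn_integral_cong)
    fix t :: real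
    show "indicator {0<..} t * emeasure lborel {x. t < k x} =
          indicator {0<..<1} t * emeasure lborel {x. t < k x}"
    proof (cases "t < 1")
      case False
      have "\<not> t < k x" for x using k1[of x] False by linarith
      then have "{x. t < k x} = {}" by auto
      then show ?thesis by simp
    qed (simp add: indicator_def)
  qed
  have lev: "ennreal l * emeasure lborel {x. t < f x} + ennreal (1 - l) * emeasure lborel {x. t < g x}
      \<le> emeasure lborel {x. t < h x}" if t: "0 < t" "t < 1" for t
  proof (rule levelset_BM)
    show "{x. t < f x} \<noteq> {}" using fs[OF t(2)] by auto
    show "{x. t < g x} \<noteq> {}" using gs[OF t(2)] by auto
    have "{x. t < f x} \<subseteq> {-n..n}"
    proof
      fix x assume "x \<in> {x. t < f x}"
      then have "f x \<noteq> 0" using t by auto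
      then have "\<bar>x\<bar> \<le> n" using fz[of x] by linarith
      then show "x \<in> {-n..n}" by (simp add: abs_le_iff)
    qed
    then show "bdd_above {x. t < f x}" "bdd_below {x. t < f x}"
      by (meson bdd_above_Icc bdd_above_mono bdd_below_Icc bdd_below_mono)+
    have "{x. t < g x} \<subseteq> {-n..n}"
    proof
      fix x assume "x \<in> {x. t < g x}"
      then have "g x \<noteq> 0" using t by auto
      then have "\<bar>x\<bar> \<le> n" using gz[of x] by linarith
      then show "x \<in> {-n..n}" by (simp add: abs_le_iff)
    qed
    then show "bdd_above {x. t < g x}" "bdd_below {x. t < g x}"
      by (meson bdd_above_Icc bdd_above_mono bdd_below_Icc bdd_below_mono)+
    show "convex {x. t < f x}" "convex {x. t < g x}" using fc gc t by auto
    show "{x. t < h x} \<in> sets lborel" by measurable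
    show "0 < l" "l < 1" using l by auto
    fix a b assume "a \<in> {x. t < f x}" "b \<in> {x. t < g x}"
    then show "l * a + (1 - l) * b \<in> {x. t < h x}" using hyp[OF t(1)] by simp
  qed
  have "ennreal l * (\<integral>\<^sup>+x. f x \<partial>lborel) + ennreal (1 - l) * (\<integral>\<^sup>+x. g x \<partial>lborel)
     = (\<integral>\<^sup>+t. indicator {0<..<1} t * (ennreal l * emeasure lborel {x. t < f x}
          + ennreal (1 - l) * emeasure lborel {x. t < g x}) \<partial>lborel)"
  proof -
    let ?F = "\<lambda>t. indicator {0<..<1} t * emeasure lborel {x. t < f x}"
    let ?G = "\<lambda>t. indicator {0<..<1} t * emeasure lborel {x. t < g x}"
    have [measurable]: "?F \<in> borel_measurable lborel" "?G \<in> borel_measurable lborel" by simp_all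
    have "(\<integral>\<^sup>+t. indicator {0<..<1} t * (ennreal l * emeasure lborel {x. t < f x}
          + ennreal (1 - l) * emeasure lborel {x. t < g x}) \<partial>lborel)
        = (\<integral>\<^sup>+t. ennreal l * ?F t + ennreal (1 - l) * ?G t \<partial>lborel)"
      by (rule nn_integral_cong) (simp add: algebra_simps)
    also have "\<dots> = (\<integral>\<^sup>+t. ennreal l * ?F t \<partial>lborel) + (\<integral>\<^sup>+t. ennreal (1 - l) * ?G t \<partial>lborel)"
      by (rule nn_integral_add) simp_all
    also have "\<dots> = ennreal l * (\<integral>\<^sup>+t. ?F t \<partial>lborel) + ennreal (1 - l) * (\<integral>\<^sup>+t. ?G t \<partial>lborel)"
      by (simp add: nn_integral_cmult)
    finally show ?thesis unfolding cut[OF mf nnf f1] cut[OF mg nng g1] by simp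
  qed
  also have "\<dots> \<le> (\<integral>\<^sup>+t. indicator {0<..} t * emeasure lborel {x. t < h x} \<partial>lborel)"
  proof (rule nn_integral_mono)
    fix t :: real
    show "indicator {0<..<1} t * (ennreal l * emeasure lborel {x. t < f x}
          + ennreal (1 - l) * emeasure lborel {x. t < g x})
        \<le> indicator {0<..} t * emeasure lborel {x. t < h x}"
    proof (cases "0 < t \<and> t < 1")
      case True
      then show ?thesis using lev[of t] by (simp add: indicator_def)
    qed (simp add: indicator_def)
  qed
  also have "\<dots> = (\<integral>\<^sup>+x. h x \<partial>lborel)" using layer_cake[OF mh nnh] by simp
  finally show ?thesis .
qed


definition lcv :: "(real \<Rightarrow> real) \<Rightarrow> bool" where
  "lcv f \<longleftrightarrow> (\<forall>a b l. 0 < l \<and> l < 1 \<longrightarrow> f a powr l * f b powr (1 - l) \<le> f (l * a + (1 - l) * b))"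

lemma powr_strict_prod:
  fixes t x y l :: real
  assumes "0 < t" "t < x" "t < y" "0 < l" "l < 1"
  shows "t < x powr l * y powr (1 - l)"
proof -
  have "t = t powr l * t powr (1 - l)" using assms by (simp add: powr_add[symmetric])
  also have "\<dots> < x powr l * y powr (1 - l)"
    using assms by (intro mult_strict_mono powr_less_mono2) auto
  finally show ?thesis .
qed

lemma lcv_convex:
  assumes "lcv f" "0 \<le> s"
  shows "convex {x. s < f x}"
  unfolding convex_def
proof (intro ballI allI impI)
  fix a b u v :: real
  assume a: "a \<in> {x. s < f x}" and b: "b \<in> {x. s < f x}" and uv: "0 \<le> u" "0 \<le> v" "u + v = 1"
  show "u *\<^sub>R a + v *\<^sub>R b \<in> {x. s < f x}"
  proof (cases "u = 0 \<or> v = 0")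
    case True
    then show ?thesis using a b uv by auto
  next
    case False
    then have u: "0 < u" "u < 1" using uv by auto
    have "s < f a powr u * f b powr (1 - u)"
    proof (cases "s = 0")
      case True
      then show ?thesis using a b by auto
    next
      case False
      then show ?thesis using a b u assms(2) by (intro powr_strict_prod) auto
    qed
    also have "\<dots> \<le> f (u * a + (1 - u) * b)" using assms(1) u unfolding lcv_def by blast
    moreover have "v = 1 - u" using uv by simp
    ultimately show ?thesis by simp
  qed
qed

lemma int_bound:
  fixes f :: "real \<Rightarrow> real"
  assumes [measurable]: "f \<in> borel_measurable borel" and "\<And>x. 0 \<le> f x" "\<And>x. f x \<le> C"
    and "\<And>x. n < \<bar>x\<bar> \<Longrightarrow> f x = 0" and "0 \<le> n"
  shows "(\<integral>\<^sup>+x. ennreal (f x) \<partial>lborel) \<le> ennreal (C * (2 * n))"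
proof -
  have "(\<integral>\<^sup>+x. ennreal (f x) \<partial>lborel) \<le> (\<integral>\<^sup>+x. ennreal C * indicator {-n..n} x \<partial>lborel)"
  proof (rule nn_integral_mono)
    fix x
    show "ennreal (f x) \<le> ennreal C * indicator {-n..n} x"
    proof (cases "x \<in> {-n..n}")
      case True then show ?thesis using assms(3) by (simp add: ennreal_leI)
    next
      case False then have "n < \<bar>x\<bar>" by auto
      then show ?thesis using assms(4) False by simp
    qed
  qed
  also have "\<dots> = ennreal C * ennreal (2 * n)" using assms(5) by (simp add: nn_integral_cmult)
  also have "\<dots> = ennreal (C * (2 * n))"
  proof -
    have "0 \<le> C" using assms(2)[of 0] assms(3)[of 0] by linarith
    then show ?thesis using assms(5) by (simp add: ennreal_mult[symmetric])
  qed
  finally show ?thesis .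
qed

lemma int_finite:
  fixes f :: "real \<Rightarrow> real"
  assumes "f \<in> borel_measurable borel" and "\<And>x. 0 \<le> f x" "\<And>x. f x \<le> C"
    and "\<And>x. n < \<bar>x\<bar> \<Longrightarrow> f x = 0" and "0 \<le> n"
  shows "(\<integral>\<^sup>+x. ennreal (f x) \<partial>lborel) = ennreal (enn2real (\<integral>\<^sup>+x. ennreal (f x) \<partial>lborel))"
  using int_bound[OF assms] by (simp add: ennreal_enn2real_if top_unique)
    (metis ennreal_less_top infinity_ennreal_def top.not_eq_extremum top_unique)

lemma int_scale:
  fixes f :: "real \<Rightarrow> real"
  assumes [measurable]: "f \<in> borel_measurable borel" and "0 \<le> c"
  shows "(\<integral>\<^sup>+x. ennreal (f x * c) \<partial>lborel) = (\<integral>\<^sup>+x. ennreal (f x) \<partial>lborel) * ennreal c"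
proof -
  have "(\<integral>\<^sup>+x. ennreal (f x * c) \<partial>lborel) = (\<integral>\<^sup>+x. ennreal (f x) * ennreal c \<partial>lborel)"
  proof (rule nn_integral_cong)
    fix x show "ennreal (f x * c) = ennreal (f x) * ennreal c"
      using assms(2) by (cases "0 \<le> f x") (simp_all add: ennreal_mult ennreal_neg mult_nonpos_nonneg)
  qed
  also have "\<dots> = (\<integral>\<^sup>+x. ennreal (f x) \<partial>lborel) * ennreal c" by (simp add: nn_integral_multc)
  finally show ?thesis .
qed


lemma pl1:
  fixes f g h :: "real \<Rightarrow> real" and l n C :: real
  assumes mf[measurable]: "f \<in> borel_measurable borel" and mg[measurable]: "g \<in> borel_measurable borel"
    and mh[measurable]: "h \<in> borel_measurable borel"
    and nnf: "\<And>x. 0 \<le> f x" and nng: "\<And>x. 0 \<le> g x" and nnh: "\<And>x. 0 \<le> h x"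
    and bf: "\<And>x. f x \<le> C" and bg: "\<And>x. g x \<le> C" and bh: "\<And>x. h x \<le> C"
    and zf: "\<And>x. n < \<bar>x\<bar> \<Longrightarrow> f x = 0" and zg: "\<And>x. n < \<bar>x\<bar> \<Longrightarrow> g x = 0"
    and zh: "\<And>x. n < \<bar>x\<bar> \<Longrightarrow> h x = 0" and n: "0 \<le> n"
    and lf: "lcv f" and lg: "lcv g" and l: "0 < l" "l < 1"
    and hyp: "\<And>a b. f a powr l * g b powr (1 - l) \<le> h (l * a + (1 - l) * b)"
  shows "enn2real (\<integral>\<^sup>+x. ennreal (f x) \<partial>lborel) powr l * enn2real (\<integral>\<^sup>+x. ennreal (g x) \<partial>lborel) powr (1 - l)
         \<le> enn2real (\<integral>\<^sup>+x. ennreal (h x) \<partial>lborel)"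
proof -
  define If where "If = enn2real (\<integral>\<^sup>+x. ennreal (f x) \<partial>lborel)"
  define Ig where "Ig = enn2real (\<integral>\<^sup>+x. ennreal (g x) \<partial>lborel)"
  define Ih where "Ih = enn2real (\<integral>\<^sup>+x. ennreal (h x) \<partial>lborel)"
  have eqf: "(\<integral>\<^sup>+x. ennreal (f x) \<partial>lborel) = ennreal If"
    unfolding If_def by (rule int_finite[OF mf nnf bf zf n])
  have eqg: "(\<integral>\<^sup>+x. ennreal (g x) \<partial>lborel) = ennreal Ig"
    unfolding Ig_def by (rule int_finite[OF mg nng bg zg n])
  have eqh: "(\<integral>\<^sup>+x. ennreal (h x) \<partial>lborel) = ennreal Ih"
    unfolding Ih_def by (rule int_finite[OF mh nnh bh zh n])
  have If0: "0 \<le> If" "0 \<le> Ig" "0 \<le> Ih" by (simp_all add: If_def Ig_def Ih_def)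
  define Mf where "Mf = Sup (range f)"
  define Mg where "Mg = Sup (range g)"
  have bdf: "bdd_above (range f)" using bf by (intro bdd_aboveI[of _ C]) auto
  have bdg: "bdd_above (range g)" using bg by (intro bdd_aboveI[of _ C]) auto
  have fM: "f x \<le> Mf" for x unfolding Mf_def using bdf by (auto intro: cSup_upper)
  have gM: "g x \<le> Mg" for x unfolding Mg_def using bdg by (auto intro: cSup_upper)
  show ?thesis
  proof (cases "Mf \<le> 0 \<or> Mg \<le> 0")
    case True
    then have "If = 0 \<or> Ig = 0"
    proof
      assume "Mf \<le> 0"
      then have "\<And>x. f x = 0" using fM nnf by (meson antisym order.trans)
      then show ?thesis by (simp add: If_def)
    next
      assume "Mg \<le> 0"
      then have "\<And>x. g x = 0" using gM nng by (meson antisym order.trans)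
      then show ?thesis by (simp add: Ig_def)
    qed
    then show ?thesis using If0 l by (auto simp flip: If_def Ig_def Ih_def)
  next
    case False
    then have Mf: "0 < Mf" and Mg: "0 < Mg" by auto
    define K where "K = Mf powr l * Mg powr (1 - l)"
    have K: "0 < K" using Mf Mg by (simp add: K_def)
    define f' where "f' x = f x * (1 / Mf)" for x
    define g' where "g' x = g x * (1 / Mg)" for x
    define h' where "h' x = h x * (1 / K)" for x
    have ef: "f' = (\<lambda>x. f x * (1 / Mf))" "g' = (\<lambda>x. g x * (1 / Mg))" "h' = (\<lambda>x. h x * (1 / K))"
      by (simp_all add: fun_eq_iff f'_def g'_def h'_def)
    have [measurable]: "f' \<in> borel_measurable borel" unfolding ef(1) by measurable
    have [measurable]: "g' \<in> borel_measurable borel" unfolding ef(2) by measurable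
    have [measurable]: "h' \<in> borel_measurable borel" unfolding ef(3) by measurable
    have core: "ennreal l * (\<integral>\<^sup>+x. f' x \<partial>lborel) + ennreal (1 - l) * (\<integral>\<^sup>+x. g' x \<partial>lborel)
         \<le> (\<integral>\<^sup>+x. h' x \<partial>lborel)"
    proof (rule pl_core[where n = n])
      show "f' \<in> borel_measurable borel" "g' \<in> borel_measurable borel"
        "h' \<in> borel_measurable borel" by simp_all
      show "0 \<le> f' x" "0 \<le> g' x" "0 \<le> h' x" for x
        using nnf nng nnh Mf Mg K by (simp_all add: f'_def g'_def h'_def)
      show "f' x \<le> 1" for x using fM[of x] Mf by (simp add: f'_def pos_divide_le_eq)
      show "g' x \<le> 1" for x using gM[of x] Mg by (simp add: g'_def pos_divide_le_eq)
      show "\<exists>x. t < f' x" if "t < 1" for t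
      proof -
        have "t * Mf < Mf" using that Mf by simp
        then have "t * Mf < Sup (range f)" by (simp add: Mf_def)
        then obtain y where "y \<in> range f" "t * Mf < y"
          using less_cSupD[of "range f" "t * Mf"] by blast
        then obtain x where "t * Mf < f x" by blast
        then have "t < f' x" using Mf by (simp add: f'_def pos_less_divide_eq)
        then show ?thesis by blast
      qed
      show "\<exists>x. t < g' x" if "t < 1" for t
      proof -
        have "t * Mg < Mg" using that Mg by simp
        then have "t * Mg < Sup (range g)" by (simp add: Mg_def)
        then obtain y where "y \<in> range g" "t * Mg < y"
          using less_cSupD[of "range g" "t * Mg"] by blast
        then obtain x where "t * Mg < g x" by blast
        then have "t < g' x" using Mg by (simp add: g'_def pos_less_divide_eq)
        then show ?thesis by blast
      qed
      show "f' x = 0" if "n < \<bar>x\<bar>" for x using zf[OF that] by (simp add: f'_def)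
      show "g' x = 0" if "n < \<bar>x\<bar>" for x using zg[OF that] by (simp add: g'_def)
      show "convex {x. t < f' x}" if "0 < t" for t
      proof -
        have "{x. t < f' x} = {x. t * Mf < f x}" using Mf by (simp add: f'_def pos_less_divide_eq)
        then show ?thesis using lcv_convex[OF lf, of "t * Mf"] that Mf by simp
      qed
      show "convex {x. t < g' x}" if "0 < t" for t
      proof -
        have "{x. t < g' x} = {x. t * Mg < g x}" using Mg by (simp add: g'_def pos_less_divide_eq)
        then show ?thesis using lcv_convex[OF lg, of "t * Mg"] that Mg by simp
      qed
      show "0 < l" "l < 1" using l by auto
      show "t < h' (l * a + (1 - l) * b)" if "0 < t" "t < f' a" "t < g' b" for a b t
      proof -
        have "t < f' a powr l * g' b powr (1 - l)" using that l by (intro powr_strict_prod) auto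
        also have "\<dots> = (f a / Mf) powr l * (g b / Mg) powr (1 - l)"
          by (simp add: f'_def g'_def)
        also have "\<dots> = (f a powr l / Mf powr l) * (g b powr (1 - l) / Mg powr (1 - l))"
          using nnf[of a] nng[of b] Mf Mg by (simp add: powr_divide)
        also have "\<dots> = (f a powr l * g b powr (1 - l)) / K"
          by (simp add: K_def)
        also have "\<dots> \<le> h (l * a + (1 - l) * b) / K" using hyp K by (simp add: divide_right_mono)
        finally show ?thesis by (simp add: h'_def)
      qed
    qed
    have "(\<integral>\<^sup>+x. f' x \<partial>lborel) = ennreal (If / Mf)"
      unfolding f'_def using int_scale[OF mf, of "1/Mf"] Mf eqf If0 by (simp add: ennreal_mult[symmetric])
    moreover have "(\<integral>\<^sup>+x. g' x \<partial>lborel) = ennreal (Ig / Mg)"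
      unfolding g'_def using int_scale[OF mg, of "1/Mg"] Mg eqg If0 by (simp add: ennreal_mult[symmetric])
    moreover have "(\<integral>\<^sup>+x. h' x \<partial>lborel) = ennreal (Ih / K)"
      unfolding h'_def using int_scale[OF mh, of "1/K"] K eqh If0 by (simp add: ennreal_mult[symmetric])
    moreover have "ennreal (l * (If / Mf) + (1 - l) * (Ig / Mg))
        = ennreal (l * (If / Mf)) + ennreal ((1 - l) * (Ig / Mg))"
      using l If0 Mf Mg by (intro ennreal_plus) auto
    moreover have "ennreal (l * (If / Mf)) = ennreal l * ennreal (If / Mf)"
      using l If0 Mf by (intro ennreal_mult) auto
    moreover have "ennreal ((1 - l) * (Ig / Mg)) = ennreal (1 - l) * ennreal (Ig / Mg)"
      using l If0 Mg by (intro ennreal_mult) auto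
    ultimately have "ennreal (l * (If / Mf) + (1 - l) * (Ig / Mg)) \<le> ennreal (Ih / K)"
      using core by metis
    then have ineq: "l * (If / Mf) + (1 - l) * (Ig / Mg) \<le> Ih / K"
      using If0 K by (simp add: ennreal_le_iff)
    show ?thesis
    proof (cases "If = 0 \<or> Ig = 0")
      case True
      then show ?thesis using If0 l by (auto simp flip: If_def Ig_def Ih_def)
    next
      case False
      then have pos: "0 < If / Mf" "0 < Ig / Mg" using If0 Mf Mg by auto
      have "If powr l * Ig powr (1 - l) = K * ((If / Mf) powr l * (Ig / Mg) powr (1 - l))"
      proof -
        have "(If / Mf) powr l * (Ig / Mg) powr (1 - l)
            = (If powr l / Mf powr l) * (Ig powr (1 - l) / Mg powr (1 - l))"
          using If0 Mf Mg by (simp add: powr_divide)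
        also have "\<dots> = (If powr l * Ig powr (1 - l)) / K" by (simp add: K_def)
        finally show ?thesis using K by simp
      qed
      also have "\<dots> \<le> K * (l * (If / Mf) + (1 - l) * (Ig / Mg))"
        using Youngs_inequality_0[of l "1 - l" "If / Mf" "Ig / Mg"] pos l K
        by (intro mult_left_mono) auto
      also have "\<dots> \<le> K * (Ih / K)" using ineq K by (intro mult_left_mono) auto
      also have "\<dots> = Ih" using K by simp
      finally show ?thesis by (simp add: If_def Ig_def Ih_def)
    qed
  qed
qed


abbreviation MU :: "(int \<times> int \<Rightarrow> real) measure" where
  "MU \<equiv> PiM UNIV (\<lambda>_. lborel)"

lemma space_MU[simp]: "space MU = UNIV"
  by (simp add: space_PiM)

lemma meas_upd2: "(\<lambda>p. (fst p)(j := snd p)) \<in> measurable (MU \<Otimes>\<^sub>M lborel) MU"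
proof -
  have "(\<lambda>p. \<lambda>k. (\<lambda>k p. if k = j then snd p else fst p k) k p) \<in> measurable (MU \<Otimes>\<^sub>M lborel) MU"
  proof (rule measurable_PiM_single')
    fix k :: "int \<times> int"
    show "(\<lambda>p. if k = j then snd p else fst p k) \<in> measurable (MU \<Otimes>\<^sub>M lborel) lborel"
      by (cases "k = j") simp_all
  qed (simp add: space_pair_measure)
  then show ?thesis by (simp add: fun_upd_def)
qed

lemma meas_upd1: "(\<lambda>t. z(j := t)) \<in> measurable lborel MU"
proof -
  have "(\<lambda>t. \<lambda>k. (\<lambda>k t. if k = j then t else z k) k t) \<in> measurable lborel MU"
  proof (rule measurable_PiM_single')
    fix k :: "int \<times> int"
    show "(\<lambda>t. if k = j then t else z k) \<in> measurable lborel lborel"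
      by (cases "k = j") simp_all
  qed simp
  then show ?thesis by (simp add: fun_upd_def)
qed

definition mrg :: "(int \<times> int) set \<Rightarrow> (int \<times> int \<Rightarrow> real) \<Rightarrow> (int \<times> int \<Rightarrow> real) \<Rightarrow> int \<times> int \<Rightarrow> real" where
  "mrg S x y = (\<lambda>k. if k \<in> S then y k else x k)"

lemma meas_mrg: "mrg S x \<in> measurable (PiM S (\<lambda>_. lborel)) MU"
proof -
  have "(\<lambda>y. \<lambda>k. (\<lambda>k y. if k \<in> S then y k else x k) k y) \<in> measurable (PiM S (\<lambda>_. lborel)) MU"
  proof (rule measurable_PiM_single')
    fix k :: "int \<times> int"
    show "(\<lambda>y. if k \<in> S then y k else x k) \<in> measurable (PiM S (\<lambda>_. lborel)) lborel"
      by (cases "k \<in> S") simp_all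
  qed simp
  then show ?thesis by (simp add: mrg_def[abs_def])
qed


definition lcf :: "((int \<times> int \<Rightarrow> real) \<Rightarrow> real) \<Rightarrow> bool" where
  "lcf F \<longleftrightarrow> (\<forall>z. 0 \<le> F z) \<and> (\<forall>z. F (\<lambda>k. - z k) = F z) \<and>
     (\<forall>z w l. 0 < l \<and> l < 1 \<longrightarrow> F z powr l * F w powr (1 - l) \<le> F (\<lambda>k. l * z k + (1 - l) * w k))"

definition lcc :: "real \<Rightarrow> (int \<times> int) set \<Rightarrow> ((int \<times> int \<Rightarrow> real) \<Rightarrow> real) \<Rightarrow> bool" where
  "lcc n S F \<longleftrightarrow> lcf F \<and> F \<in> borel_measurable MU \<and> (\<exists>C. \<forall>z. F z \<le> C) \<and>
     (\<forall>z. (\<exists>k\<in>S. n < \<bar>z k\<bar>) \<longrightarrow> F z = 0) \<and> 0 \<le> n"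

lemma lcc_step:
  assumes F: "lcc n (insert j S) F" and j: "j \<notin> S"
  shows "lcc n S (\<lambda>z. enn2real (\<integral>\<^sup>+t. ennreal (F (z(j := t))) \<partial>lborel))"
    and "\<And>z. (\<integral>\<^sup>+t. ennreal (F (z(j := t))) \<partial>lborel)
             = ennreal (enn2real (\<integral>\<^sup>+t. ennreal (F (z(j := t))) \<partial>lborel))"
proof -
  have nn: "\<And>z. 0 \<le> F z" and sym: "\<And>z. F (\<lambda>k. - z k) = F z"
    and lc: "\<And>z w l. 0 < l \<Longrightarrow> l < 1 \<Longrightarrow> F z powr l * F w powr (1 - l) \<le> F (\<lambda>k. l * z k + (1 - l) * w k)"
    and mF[measurable]: "F \<in> borel_measurable MU"
    and zero: "\<And>z. (\<exists>k\<in>insert j S. n < \<bar>z k\<bar>) \<Longrightarrow> F z = 0" and n: "0 \<le> n"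
    using F unfolding lcc_def lcf_def by blast+
  obtain C where bC: "\<And>z. F z \<le> C" using F unfolding lcc_def by blast
  have C0: "0 \<le> C" using nn[of undefined] bC[of undefined] by linarith
  define G where "G z = enn2real (\<integral>\<^sup>+t. ennreal (F (z(j := t))) \<partial>lborel)" for z
  have mz[measurable]: "(\<lambda>t. F (z(j := t))) \<in> borel_measurable borel" for z
    using measurable_compose[OF meas_upd1 mF] by simp
  have zt: "F (z(j := t)) = 0" if "n < \<bar>t\<bar>" for z t using zero[of "z(j := t)"] that by auto
  have fin: "(\<integral>\<^sup>+t. ennreal (F (z(j := t))) \<partial>lborel) = ennreal (G z)" for z
    unfolding G_def by (rule int_finite[OF mz nn bC zt n])
  then show "\<And>z. (\<integral>\<^sup>+t. ennreal (F (z(j := t))) \<partial>lborel)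
             = ennreal (enn2real (\<integral>\<^sup>+t. ennreal (F (z(j := t))) \<partial>lborel))"
    by (simp add: G_def)
  have lcvz: "lcv (\<lambda>t. F (z(j := t)))" for z
    unfolding lcv_def
  proof (intro allI impI)
    fix a b l :: real assume l: "0 < l \<and> l < 1"
    have "(\<lambda>k. l * (z(j := a)) k + (1 - l) * (z(j := b)) k) = z(j := l * a + (1 - l) * b)"
      by (auto simp: fun_eq_iff algebra_simps)
    then show "F (z(j := a)) powr l * F (z(j := b)) powr (1 - l) \<le> F (z(j := l * a + (1 - l) * b))"
      using lc[of l "z(j := a)" "z(j := b)"] l by simp
  qed
  have Gnn: "0 \<le> G z" for z by (simp add: G_def)
  have Gsym: "G (\<lambda>k. - z k) = G z" for z
  proof -
    have "(\<integral>\<^sup>+t. ennreal (F ((\<lambda>k. - z k)(j := t))) \<partial>lborel)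
        = (\<integral>\<^sup>+t. ennreal (F (z(j := - t))) \<partial>lborel)"
    proof (rule nn_integral_cong)
      fix t
      have e: "(\<lambda>k. - z k)(j := t) = (\<lambda>k. - (z(j := - t)) k)" by (auto simp: fun_eq_iff)
      show "ennreal (F ((\<lambda>k. - z k)(j := t))) = ennreal (F (z(j := - t)))"
        by (simp only: e sym[of "z(j := - t)"])
    qed
    also have "\<dots> = (\<integral>\<^sup>+t. ennreal (F (z(j := t))) \<partial>lborel)"
      using nn_integral_real_affine[of "\<lambda>t. ennreal (F (z(j := t)))" "-1" 0] by simp
    finally show ?thesis by (simp add: G_def)
  qed
  have Glc: "G z powr l * G w powr (1 - l) \<le> G (\<lambda>k. l * z k + (1 - l) * w k)"
    if l: "0 < l" "l < 1" for z w l
  proof -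
    define m where "m = (\<lambda>k. l * z k + (1 - l) * w k)"
    have "enn2real (\<integral>\<^sup>+t. ennreal (F (z(j := t))) \<partial>lborel) powr l *
          enn2real (\<integral>\<^sup>+t. ennreal (F (w(j := t))) \<partial>lborel) powr (1 - l)
          \<le> enn2real (\<integral>\<^sup>+t. ennreal (F (m(j := t))) \<partial>lborel)"
    proof (rule pl1[where n = n and C = C])
      show "F (z(j := a)) powr l * F (w(j := b)) powr (1 - l) \<le> F (m(j := l * a + (1 - l) * b))" for a b
      proof -
        have "(\<lambda>k. l * (z(j := a)) k + (1 - l) * (w(j := b)) k) = m(j := l * a + (1 - l) * b)"
          by (auto simp: fun_eq_iff m_def)
        then show ?thesis using lc[of l "z(j := a)" "w(j := b)"] l by simp
      qed
    qed (use nn bC zt n lcvz l in auto)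
    then show ?thesis by (simp add: G_def m_def)
  qed
  have Gb: "G z \<le> C * (2 * n)" for z
  proof -
    have "ennreal (G z) \<le> ennreal (C * (2 * n))"
      using int_bound[OF mz nn bC zt n, of z] fin[of z] by simp
    then show ?thesis using C0 n by (simp add: ennreal_le_iff)
  qed
  have Gz: "G z = 0" if ex: "\<exists>k\<in>S. n < \<bar>z k\<bar>" for z
  proof -
    have "F (z(j := t)) = 0" for t
    proof (rule zero)
      obtain k where "k \<in> S" "n < \<bar>z k\<bar>" using ex by blast
      then show "\<exists>k\<in>insert j S. n < \<bar>(z(j := t)) k\<bar>" using j by (intro bexI[of _ k]) auto
    qed
    then show ?thesis by (simp add: G_def)
  qed
  have Gm: "G \<in> borel_measurable MU"
  proof -
    have "(\<lambda>p. ennreal (F ((fst p)(j := snd p)))) \<in> borel_measurable (MU \<Otimes>\<^sub>M lborel)"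
      using measurable_compose[OF meas_upd2 mF] by simp
    then have "(\<lambda>z. \<integral>\<^sup>+t. ennreal (F (z(j := t))) \<partial>lborel) \<in> borel_measurable MU"
      by (intro lborel.borel_measurable_nn_integral) (simp add: case_prod_beta)
    then show ?thesis unfolding G_def[abs_def] by simp
  qed
  show "lcc n S (\<lambda>z. enn2real (\<integral>\<^sup>+t. ennreal (F (z(j := t))) \<partial>lborel))"
    unfolding lcc_def lcf_def G_def[symmetric]
    using Gnn Gsym Glc Gb Gz Gm n by (auto simp flip: G_def)
qed


lemma mrg_insert: "j \<notin> S \<Longrightarrow> mrg (insert j S) x (y(j := t)) = (mrg S x y)(j := t)"
  by (auto simp: mrg_def fun_eq_iff)

lemma lcc_marg:
  assumes "finite S"
  shows "lcc n S F \<Longrightarrow> \<exists>\<Phi>. lcf \<Phi> \<and>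
    (\<forall>x. (\<integral>\<^sup>+y. ennreal (F (mrg S x y)) \<partial>PiM S (\<lambda>_. lborel)) = ennreal (\<Phi> x))"
  using assms
proof (induction S arbitrary: F rule: finite_induct)
  case empty
  have "(\<integral>\<^sup>+y. ennreal (F (mrg {} x y)) \<partial>PiM {} (\<lambda>_. lborel)) = ennreal (F x)" for x
    by (simp add: PiM_empty nn_integral_count_space_finite mrg_def)
  then show ?case using empty unfolding lcc_def by blast
next
  case (insert j S)
  interpret product_sigma_finite "\<lambda>_::int \<times> int. lborel" by standard
  have mF[measurable]: "F \<in> borel_measurable MU" using insert.prems unfolding lcc_def by blast
  define G where "G z = enn2real (\<integral>\<^sup>+t. ennreal (F (z(j := t))) \<partial>lborel)" for z
  have G: "lcc n S G" unfolding G_def[abs_def] by (rule lcc_step(1)[OF insert.prems insert.hyps(2)])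
  have Gi: "(\<integral>\<^sup>+t. ennreal (F (z(j := t))) \<partial>lborel) = ennreal (G z)" for z
    unfolding G_def by (rule lcc_step(2)[OF insert.prems insert.hyps(2)])
  obtain \<Phi> where \<Phi>: "lcf \<Phi>"
    "\<And>x. (\<integral>\<^sup>+y. ennreal (G (mrg S x y)) \<partial>PiM S (\<lambda>_. lborel)) = ennreal (\<Phi> x)"
    using insert.IH[OF G] by blast
  have "(\<integral>\<^sup>+y. ennreal (F (mrg (insert j S) x y)) \<partial>PiM (insert j S) (\<lambda>_. lborel)) = ennreal (\<Phi> x)" for x
  proof -
    have m: "(\<lambda>y. ennreal (F (mrg (insert j S) x y))) \<in> borel_measurable (PiM (insert j S) (\<lambda>_. lborel))"
      using measurable_compose[OF meas_mrg mF] by simp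
    have "(\<integral>\<^sup>+y. ennreal (F (mrg (insert j S) x y)) \<partial>PiM (insert j S) (\<lambda>_. lborel))
       = (\<integral>\<^sup>+y. (\<integral>\<^sup>+t. ennreal (F (mrg (insert j S) x (y(j := t)))) \<partial>lborel) \<partial>PiM S (\<lambda>_. lborel))"
      by (rule product_nn_integral_insert[OF insert.hyps(1,2) m])
    also have "\<dots> = (\<integral>\<^sup>+y. ennreal (G (mrg S x y)) \<partial>PiM S (\<lambda>_. lborel))"
      by (simp add: mrg_insert[OF insert.hyps(2)] Gi)
    also have "\<dots> = ennreal (\<Phi> x)" by (rule \<Phi>(2))
    finally show ?thesis .
  qed
  then show ?case using \<Phi>(1) by blast
qed


lemma adm_even: "admissible_potential r \<Psi> \<Longrightarrow> \<Psi> k (- x) = \<Psi> k x"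
  unfolding admissible_potential_def by metis

lemma adm_convex:
  assumes "admissible_potential r \<Psi>"
  shows "convex_on UNIV (\<Psi> k)"
proof -
  have d1: "\<And>x. \<Psi> k differentiable at x" and d2: "\<And>x. deriv (\<Psi> k) differentiable at x"
    and pos: "\<And>x. deriv (deriv (\<Psi> k)) x \<ge> 0"
    using assms unfolding admissible_potential_def by blast+
  show ?thesis
  proof (rule convex_on_realI[where f' = "deriv (\<Psi> k)"])
    show "connected (UNIV :: real set)" by simp
    show "(\<Psi> k has_real_derivative deriv (\<Psi> k) x) (at x)" for x
      using d1 DERIV_deriv_iff_real_differentiable by blast
    show "deriv (\<Psi> k) x \<le> deriv (\<Psi> k) y" if "x \<le> y" for x y
      using that
      by (rule deriv_nonneg_imp_mono[where g' = "deriv (deriv (\<Psi> k))", rotated 2])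
         (use d2 DERIV_deriv_iff_real_differentiable pos in blast)+
  qed
qed

lemma adm_cont:
  assumes "admissible_potential r \<Psi>"
  shows "continuous_on UNIV (\<Psi> k)"
proof -
  have "\<And>x. \<Psi> k differentiable at x" using assms unfolding admissible_potential_def by blast
  then show ?thesis
    by (meson continuous_at_imp_continuous_on differentiable_imp_continuous_within)
qed

abbreviation HH where "HH r \<Psi> \<Lambda> \<equiv> hamiltonian r \<Psi> \<Lambda> 0"

lemma ext_conf_lin:
  "ext_conf \<Lambda> 0 (\<lambda>k. l * z k + (1 - l) * w k) i = l * ext_conf \<Lambda> 0 z i + (1 - l) * ext_conf \<Lambda> 0 w i"
  by (simp add: ext_conf_def)

lemma half_conv: "(a::real) \<le> l * b + (1 - l) * c \<Longrightarrow> (1/2) * a \<le> l * ((1/2) * b) + (1 - l) * ((1/2) * c)"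
  by (simp add: field_simps)

lemma H_convex:
  assumes "admissible_potential r \<Psi>" "0 \<le> l" "l \<le> 1"
  shows "HH r \<Psi> \<Lambda> (\<lambda>k. l * z k + (1 - l) * w k) \<le> l * HH r \<Psi> \<Lambda> z + (1 - l) * HH r \<Psi> \<Lambda> w"
proof -
  let ?e = "ext_conf \<Lambda> 0"
  have trm: "\<Psi> (site_diff q p) (?e (\<lambda>k. l * z k + (1 - l) * w k) p - ?e (\<lambda>k. l * z k + (1 - l) * w k) q)
      \<le> l * \<Psi> (site_diff q p) (?e z p - ?e z q) + (1 - l) * \<Psi> (site_diff q p) (?e w p - ?e w q)" for p q
  proof -
    have eq: "?e (\<lambda>k. l * z k + (1 - l) * w k) p - ?e (\<lambda>k. l * z k + (1 - l) * w k) q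
        = (1 - (1 - l)) *\<^sub>R (?e z p - ?e z q) + (1 - l) *\<^sub>R (?e w p - ?e w q)"
      unfolding ext_conf_lin by (simp add: algebra_simps)
    show ?thesis unfolding eq
      using convex_onD[OF adm_convex[OF assms(1)], of "1 - l" "?e z p - ?e z q" "?e w p - ?e w q"] assms(2,3)
      by simp
  qed
  have "(\<Sum>(p, q)\<in>pairs r \<Lambda>. \<Psi> (site_diff q p) (?e (\<lambda>k. l * z k + (1 - l) * w k) p - ?e (\<lambda>k. l * z k + (1 - l) * w k) q))
      \<le> (\<Sum>(p, q)\<in>pairs r \<Lambda>. l * \<Psi> (site_diff q p) (?e z p - ?e z q) + (1 - l) * \<Psi> (site_diff q p) (?e w p - ?e w q))"
    by (rule sum_mono) (use trm in auto)
  also have "\<dots> = l * (\<Sum>(p, q)\<in>pairs r \<Lambda>. \<Psi> (site_diff q p) (?e z p - ?e z q))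
      + (1 - l) * (\<Sum>(p, q)\<in>pairs r \<Lambda>. \<Psi> (site_diff q p) (?e w p - ?e w q))"
    by (simp add: sum.distrib sum_distrib_left case_prod_beta)
  finally show ?thesis unfolding hamiltonian_def by (rule half_conv)
qed

lemma H_sym:
  assumes "admissible_potential r \<Psi>"
  shows "HH r \<Psi> \<Lambda> (\<lambda>k. - z k) = HH r \<Psi> \<Lambda> z"
proof -
  have "\<Psi> k (ext_conf \<Lambda> 0 (\<lambda>k. - z k) p - ext_conf \<Lambda> 0 (\<lambda>k. - z k) q) = \<Psi> k (ext_conf \<Lambda> 0 z p - ext_conf \<Lambda> 0 z q)"
    for k p q
  proof -
    have e: "ext_conf \<Lambda> 0 (\<lambda>k. - z k) p' = - ext_conf \<Lambda> 0 z p'" for p' by (simp add: ext_conf_def)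
    have "\<Psi> k (ext_conf \<Lambda> 0 (\<lambda>k. - z k) p - ext_conf \<Lambda> 0 (\<lambda>k. - z k) q)
        = \<Psi> k (- (ext_conf \<Lambda> 0 z p - ext_conf \<Lambda> 0 z q))" unfolding e by simp
    also have "\<dots> = \<Psi> k (ext_conf \<Lambda> 0 z p - ext_conf \<Lambda> 0 z q)" by (rule adm_even[OF assms])
    finally show ?thesis .
  qed
  then show ?thesis unfolding hamiltonian_def by simp
qed

lemma H_cong:
  assumes "\<And>k. k \<in> \<Lambda> \<Longrightarrow> z k = z' k"
  shows "HH r \<Psi> \<Lambda> z = HH r \<Psi> \<Lambda> z'"
proof -
  have "ext_conf \<Lambda> 0 z = ext_conf \<Lambda> 0 z'" using assms by (auto simp: ext_conf_def fun_eq_iff)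
  then show ?thesis unfolding hamiltonian_def by simp
qed

lemma H_meas:
  assumes "admissible_potential r \<Psi>"
  shows "HH r \<Psi> \<Lambda> \<in> borel_measurable MU"
proof -
  have c[measurable]: "\<Psi> k \<in> borel_measurable borel" for k
    using adm_cont[OF assms] by (rule borel_measurable_continuous_onI)
  have e[measurable]: "(\<lambda>z. ext_conf \<Lambda> 0 z p) \<in> borel_measurable MU" for p
    unfolding ext_conf_def by (cases "p \<in> \<Lambda>") simp_all
  have "(\<lambda>z. (\<Sum>pq\<in>pairs r \<Lambda>. (case pq of (p, q) \<Rightarrow> \<Psi> (site_diff q p) (ext_conf \<Lambda> 0 z p - ext_conf \<Lambda> 0 z q))))
     \<in> borel_measurable MU"
    by (intro borel_measurable_sum) (auto simp: case_prod_beta)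
  then show ?thesis unfolding hamiltonian_def[abs_def] by simp
qed


definition EE where "EE r \<Psi> \<Lambda> z = exp (- HH r \<Psi> \<Lambda> z)"

definition FN where
  "FN r \<Psi> \<Lambda> N z = (if \<forall>k\<in>\<Lambda>. \<bar>z k\<bar> \<le> N then min (EE r \<Psi> \<Lambda> z) N else 0)"

lemma exp_powr': "exp (x::real) powr l = exp (l * x)"
  by (simp add: powr_def ln_exp)

lemma EE_lc:
  assumes "admissible_potential r \<Psi>" "0 < l" "l < 1"
  shows "EE r \<Psi> \<Lambda> z powr l * EE r \<Psi> \<Lambda> w powr (1 - l) \<le> EE r \<Psi> \<Lambda> (\<lambda>k. l * z k + (1 - l) * w k)"
proof -
  have "EE r \<Psi> \<Lambda> z powr l * EE r \<Psi> \<Lambda> w powr (1 - l)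
      = exp (- (l * HH r \<Psi> \<Lambda> z + (1 - l) * HH r \<Psi> \<Lambda> w))"
    unfolding EE_def exp_powr' exp_add[symmetric] by (rule arg_cong[where f = exp]) (simp add: algebra_simps)
  also have "\<dots> \<le> EE r \<Psi> \<Lambda> (\<lambda>k. l * z k + (1 - l) * w k)"
    unfolding EE_def using H_convex[OF assms(1), of l \<Lambda> z w] assms(2,3) by simp
  finally show ?thesis .
qed

lemma EE_sym: "admissible_potential r \<Psi> \<Longrightarrow> EE r \<Psi> \<Lambda> (\<lambda>k. - z k) = EE r \<Psi> \<Lambda> z"
  by (simp add: EE_def H_sym)

lemma EE_cong:
  assumes "\<And>k. k \<in> \<Lambda> \<Longrightarrow> z k = z' k" shows "EE r \<Psi> \<Lambda> z = EE r \<Psi> \<Lambda> z'"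
  unfolding EE_def using H_cong[of \<Lambda> z z' r \<Psi>, OF assms] by simp

lemma EE_meas: "admissible_potential r \<Psi> \<Longrightarrow> EE r \<Psi> \<Lambda> \<in> borel_measurable MU"
  unfolding EE_def[abs_def] using H_meas[of r \<Psi> \<Lambda>] by measurable

lemma FN_cong: "(\<And>k. k \<in> \<Lambda> \<Longrightarrow> z k = z' k) \<Longrightarrow> FN r \<Psi> \<Lambda> N z = FN r \<Psi> \<Lambda> N z'"
  unfolding FN_def using EE_cong[of \<Lambda> z z' r \<Psi>] by auto

lemma FN_lcc:
  assumes adm: "admissible_potential r \<Psi>" and fin: "finite \<Lambda>" and S: "S \<subseteq> \<Lambda>" and N: "0 \<le> N"
  shows "lcc N S (FN r \<Psi> \<Lambda> N)"
proof -
  let ?E = "EE r \<Psi> \<Lambda>" and ?F = "FN r \<Psi> \<Lambda> N"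
  have Epos: "0 < ?E z" for z by (simp add: EE_def)
  have nn: "0 \<le> ?F z" for z using Epos[of z] N by (simp add: FN_def)
  have sym: "?F (\<lambda>k. - z k) = ?F z" for z by (simp add: FN_def EE_sym[OF adm])
  have lc: "?F z powr l * ?F w powr (1 - l) \<le> ?F (\<lambda>k. l * z k + (1 - l) * w k)"
    if l: "0 < l" "l < 1" for z w l
  proof (cases "(\<forall>k\<in>\<Lambda>. \<bar>z k\<bar> \<le> N) \<and> (\<forall>k\<in>\<Lambda>. \<bar>w k\<bar> \<le> N)")
    case True
    have box: "\<forall>k\<in>\<Lambda>. \<bar>l * z k + (1 - l) * w k\<bar> \<le> N"
    proof
      fix k assume k: "k \<in> \<Lambda>"
      have "\<bar>l * z k + (1 - l) * w k\<bar> \<le> \<bar>l * z k\<bar> + \<bar>(1 - l) * w k\<bar>"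
        by (rule abs_triangle_ineq)
      also have "\<dots> = l * \<bar>z k\<bar> + (1 - l) * \<bar>w k\<bar>" using l by (simp add: abs_mult)
      also have "\<dots> \<le> l * N + (1 - l) * N"
        using True k l by (intro add_mono mult_left_mono) auto
      finally show "\<bar>l * z k + (1 - l) * w k\<bar> \<le> N" by (simp add: algebra_simps)
    qed
    let ?u = "min (?E z) N" and ?v = "min (?E w) N"
    have u: "0 \<le> ?u" "0 \<le> ?v" using Epos[of z] Epos[of w] N by auto
    have a1: "?u powr l \<le> ?E z powr l" using u l by (intro powr_mono2) auto
    have a2: "?v powr (1 - l) \<le> ?E w powr (1 - l)" using u l by (intro powr_mono2) auto
    have "?u powr l * ?v powr (1 - l) \<le> ?E z powr l * ?E w powr (1 - l)"
      using a1 a2 by (rule mult_mono) simp_all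
    also have "\<dots> \<le> ?E (\<lambda>k. l * z k + (1 - l) * w k)" by (rule EE_lc[OF adm l])
    finally have 1: "?u powr l * ?v powr (1 - l) \<le> ?E (\<lambda>k. l * z k + (1 - l) * w k)" .
    have b1: "?u powr l \<le> N powr l" using u l by (intro powr_mono2) auto
    have b2: "?v powr (1 - l) \<le> N powr (1 - l)" using u l by (intro powr_mono2) auto
    have "?u powr l * ?v powr (1 - l) \<le> N powr l * N powr (1 - l)"
      using b1 b2 by (rule mult_mono) simp_all
    also have "\<dots> \<le> N"
    proof (cases "N = 0")
      case False then show ?thesis using N by (simp add: powr_add[symmetric])
    qed simp
    finally have 2: "?u powr l * ?v powr (1 - l) \<le> N" .
    show ?thesis using True box 1 2 by (simp add: FN_def)
  next
    case False
    then have "?F z = 0 \<or> ?F w = 0" by (auto simp: FN_def)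
    then show ?thesis using nn by auto
  qed
  have mE[measurable]: "?E \<in> borel_measurable MU" by (rule EE_meas[OF adm])
  have [measurable]: "finite \<Lambda>" by (rule fin)
  have mF: "?F \<in> borel_measurable MU" unfolding FN_def[abs_def] by measurable
  have bd: "\<forall>z. ?F z \<le> N" using N by (simp add: FN_def)
  have zero: "\<forall>z. (\<exists>k\<in>S. N < \<bar>z k\<bar>) \<longrightarrow> ?F z = 0" using S by (force simp: FN_def)
  show ?thesis unfolding lcc_def lcf_def using nn sym lc mF bd zero N by blast
qed

lemma FN_mono: "N \<le> N' \<Longrightarrow> FN r \<Psi> \<Lambda> N z \<le> FN r \<Psi> \<Lambda> N' z"
  unfolding FN_def by (auto simp: EE_def)

lemma FN_le: "FN r \<Psi> \<Lambda> N z \<le> EE r \<Psi> \<Lambda> z"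
  unfolding FN_def by (auto simp: EE_def)

lemma FN_SUP:
  assumes "finite \<Lambda>"
  shows "(SUP N::nat. ennreal (FN r \<Psi> \<Lambda> (real N) z)) = ennreal (EE r \<Psi> \<Lambda> z)"
proof (rule antisym)
  show "(SUP N::nat. ennreal (FN r \<Psi> \<Lambda> (real N) z)) \<le> ennreal (EE r \<Psi> \<Lambda> z)"
    by (rule SUP_least) (simp add: FN_le ennreal_leI)
  define B where "B = Max (insert (EE r \<Psi> \<Lambda> z) ((\<lambda>k. \<bar>z k\<bar>) ` \<Lambda>))"
  define N0 where "N0 = nat (ceiling B)"
  have fin: "finite (insert (EE r \<Psi> \<Lambda> z) ((\<lambda>k. \<bar>z k\<bar>) ` \<Lambda>))" using assms by simp
  have BN: "B \<le> real N0" unfolding N0_def by linarith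
  have "EE r \<Psi> \<Lambda> z \<le> B" unfolding B_def using fin by (intro Max_ge) auto
  moreover have "\<bar>z k\<bar> \<le> B" if "k \<in> \<Lambda>" for k unfolding B_def using fin that by (intro Max_ge) auto
  ultimately have "\<forall>k\<in>\<Lambda>. \<bar>z k\<bar> \<le> real N0" "EE r \<Psi> \<Lambda> z \<le> real N0" using BN by force+
  then have "FN r \<Psi> \<Lambda> (real N0) z = EE r \<Psi> \<Lambda> z" by (simp add: FN_def)
  then show "ennreal (EE r \<Psi> \<Lambda> z) \<le> (SUP N::nat. ennreal (FN r \<Psi> \<Lambda> (real N) z))"
    by (metis SUP_upper UNIV_I)
qed

lemma lcf_line:
  assumes "lcf \<Phi>" "\<bar>s'\<bar> \<le> \<bar>s\<bar>"
  shows "\<Phi> (\<lambda>k. if k = i then s else 0) \<le> \<Phi> (\<lambda>k. if k = i then s' else 0)"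
proof -
  define e where "e s = (\<lambda>k::int \<times> int. if k = i then s else (0::real))" for s
  have nn: "\<And>z. 0 \<le> \<Phi> z" and sym: "\<And>z. \<Phi> (\<lambda>k. - z k) = \<Phi> z"
    and lc: "\<And>z w l. 0 < l \<Longrightarrow> l < 1 \<Longrightarrow> \<Phi> z powr l * \<Phi> w powr (1 - l) \<le> \<Phi> (\<lambda>k. l * z k + (1 - l) * w k)"
    using assms(1) unfolding lcf_def by blast+
  have esym: "\<Phi> (e (- t)) = \<Phi> (e t)" for t
  proof -
    have "e (- t) = (\<lambda>k. - e t k)" by (auto simp: e_def fun_eq_iff)
    then show ?thesis using sym by simp
  qed
  have "\<Phi> (e s) \<le> \<Phi> (e s')"
  proof (cases "s' = s \<or> s' = - s")
    case True then show ?thesis using esym by auto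
  next
    case False
    then have lt: "\<bar>s'\<bar> < \<bar>s\<bar>" using assms(2) by (auto simp: abs_if split: if_splits)
    then have s0: "s \<noteq> 0" by auto
    define l where "l = (1 + s' / s) / 2"
    have q: "\<bar>s' / s\<bar> < 1" using lt s0 by (simp add: abs_divide divide_less_eq)
    then have q2: "s' / s < 1" "- 1 < s' / s" unfolding abs_less_iff by linarith+
    have l: "0 < l" "l < 1" unfolding l_def using q2 by simp_all
    have "e s' = (\<lambda>k. l * e s k + (1 - l) * e (- s) k)"
      using s0 by (auto simp: e_def fun_eq_iff l_def field_simps)
    then have "\<Phi> (e s) powr l * \<Phi> (e (- s)) powr (1 - l) \<le> \<Phi> (e s')" using lc[OF l] by simp
    moreover have "\<Phi> (e s) powr l * \<Phi> (e (- s)) powr (1 - l) = \<Phi> (e s)"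
    proof (cases "\<Phi> (e s) = 0")
      case False
      then have "0 < \<Phi> (e s)" using nn[of "e s"] by simp
      then show ?thesis using esym by (simp add: powr_add[symmetric])
    qed (simp add: esym)
    ultimately show ?thesis by simp
  qed
  then show ?thesis by (simp add: e_def)
qed


definition gg where
  "gg r \<Psi> \<Lambda> i s = (\<integral>\<^sup>+y. ennreal (EE r \<Psi> \<Lambda> (mrg (\<Lambda> - {i}) (\<lambda>k. if k = i then s else 0) y))
      \<partial>PiM (\<Lambda> - {i}) (\<lambda>_. lborel))"

lemma gg_mono:
  assumes adm: "admissible_potential r \<Psi>" and fin: "finite \<Lambda>" and s: "\<bar>s'\<bar> \<le> \<bar>s\<bar>"
  shows "gg r \<Psi> \<Lambda> i s \<le> gg r \<Psi> \<Lambda> i s'"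
proof -
  define I where "I = \<Lambda> - {i}"
  define e where "e t = (\<lambda>k::int \<times> int. if k = i then t else (0::real))" for t
  have finI: "finite I" using fin by (simp add: I_def)
  have "\<forall>N::nat. \<exists>\<Phi>. lcf \<Phi> \<and>
      (\<forall>x. (\<integral>\<^sup>+y. ennreal (FN r \<Psi> \<Lambda> (real N) (mrg I x y)) \<partial>PiM I (\<lambda>_. lborel)) = ennreal (\<Phi> x))"
    using lcc_marg[OF finI FN_lcc[OF adm fin _ of_nat_0_le_iff]] by (simp add: I_def)
  then obtain \<Phi> where \<Phi>: "\<And>N. lcf (\<Phi> N)"
    "\<And>N x. (\<integral>\<^sup>+y. ennreal (FN r \<Psi> \<Lambda> (real N) (mrg I x y)) \<partial>PiM I (\<lambda>_. lborel)) = ennreal (\<Phi> N x)"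
    by metis
  have repr: "gg r \<Psi> \<Lambda> i t = (SUP N::nat. ennreal (\<Phi> N (e t)))" for t
  proof -
    have mF: "FN r \<Psi> \<Lambda> (real N) \<in> borel_measurable MU" for N :: nat
      using FN_lcc[OF adm fin subset_refl of_nat_0_le_iff] unfolding lcc_def by blast
    have "gg r \<Psi> \<Lambda> i t = (\<integral>\<^sup>+y. (SUP N::nat. ennreal (FN r \<Psi> \<Lambda> (real N) (mrg I (e t) y))) \<partial>PiM I (\<lambda>_. lborel))"
      unfolding gg_def I_def[symmetric] e_def[symmetric] using FN_SUP[OF fin] by simp
    also have "\<dots> = (SUP N::nat. (\<integral>\<^sup>+y. ennreal (FN r \<Psi> \<Lambda> (real N) (mrg I (e t) y)) \<partial>PiM I (\<lambda>_. lborel)))"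
    proof (rule nn_integral_monotone_convergence_SUP)
      show "incseq (\<lambda>N y. ennreal (FN r \<Psi> \<Lambda> (real N) (mrg I (e t) y)))"
        by (auto simp: incseq_def le_fun_def intro!: ennreal_leI FN_mono)
      show "(\<lambda>y. ennreal (FN r \<Psi> \<Lambda> (real N) (mrg I (e t) y))) \<in> borel_measurable (PiM I (\<lambda>_. lborel))" for N
        using measurable_compose[OF meas_mrg mF[of N]] by simp
    qed
    also have "\<dots> = (SUP N::nat. ennreal (\<Phi> N (e t)))" by (simp add: \<Phi>(2))
    finally show ?thesis .
  qed
  show ?thesis unfolding repr e_def
    by (intro SUP_mono' ennreal_leI lcf_line[OF \<Phi>(1) s])
qed

lemma meas_mrg_line:
  "(\<lambda>p. mrg I (\<lambda>k. if k = i then fst p else 0) (snd p)) \<in> measurable (lborel \<Otimes>\<^sub>M PiM I (\<lambda>_. lborel)) MU"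
proof -
  have "(\<lambda>p. \<lambda>k. (\<lambda>k p. if k \<in> I then snd p k else (if k = i then fst p else 0)) k p)
       \<in> measurable (lborel \<Otimes>\<^sub>M PiM I (\<lambda>_. lborel)) MU"
  proof (rule measurable_PiM_single')
    fix k :: "int \<times> int"
    show "(\<lambda>p. if k \<in> I then snd p k else (if k = i then fst p else 0))
        \<in> measurable (lborel \<Otimes>\<^sub>M PiM I (\<lambda>_. lborel)) lborel"
      by (cases "k \<in> I"; cases "k = i") simp_all
  qed simp
  then show ?thesis by (simp add: mrg_def[abs_def])
qed

lemma gg_meas:
  assumes adm: "admissible_potential r \<Psi>" and fin: "finite \<Lambda>"
  shows "gg r \<Psi> \<Lambda> i \<in> borel_measurable borel"
proof -
  interpret product_sigma_finite "\<lambda>_::int \<times> int. lborel" by standard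
  have sf: "sigma_finite_measure (PiM (\<Lambda> - {i}) (\<lambda>_. lborel))" using fin by (intro sigma_finite) simp
  have m: "(\<lambda>p. ennreal (EE r \<Psi> \<Lambda> (mrg (\<Lambda> - {i}) (\<lambda>k. if k = i then fst p else 0) (snd p))))
      \<in> borel_measurable (lborel \<Otimes>\<^sub>M PiM (\<Lambda> - {i}) (\<lambda>_. lborel))"
    using measurable_compose[OF meas_mrg_line EE_meas[OF adm]] by simp
  have "(\<lambda>s. \<integral>\<^sup>+y. ennreal (EE r \<Psi> \<Lambda> (mrg (\<Lambda> - {i}) (\<lambda>k. if k = i then s else 0) y)) \<partial>PiM (\<Lambda> - {i}) (\<lambda>_. lborel))
      \<in> borel_measurable lborel"
    by (rule sigma_finite_measure.borel_measurable_nn_integral[OF sf]) (use m in \<open>simp add: case_prod_beta\<close>)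
  then show ?thesis unfolding gg_def[abs_def] by simp
qed


lemma ind_scale:
  fixes a x :: real
  assumes "0 < a"
  shows "indicator {-a..a} (a * x) = (indicator {-1..1} x :: ennreal)"
proof -
  have 1: "(-a \<le> a * x) = (-1 \<le> x)" using mult_le_cancel_left_pos[OF assms, of "-1" x] by simp
  have 2: "(a * x \<le> a) = (x \<le> 1)" using mult_le_cancel_left_pos[OF assms, of x 1] by simp
  have "(a * x \<in> {-a..a}) = (x \<in> {-1..1})" using 1 2 by auto
  then show ?thesis by (simp add: indicator_def)
qed

lemma scale_int:
  fixes g :: "real \<Rightarrow> ennreal"
  assumes [measurable]: "g \<in> borel_measurable borel" and a: "0 < a"
  shows "(\<integral>\<^sup>+s. indicator {-a..a} s * g s \<partial>lborel)
       = ennreal a * (\<integral>\<^sup>+u. indicator {-1..1} u * g (a * u) \<partial>lborel)"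
proof -
  have "(\<integral>\<^sup>+s. indicator {-a..a} s * g s \<partial>lborel)
      = ennreal \<bar>a\<bar> * (\<integral>\<^sup>+x. indicator {-a..a} (0 + a * x) * g (0 + a * x) \<partial>lborel)"
    by (rule nn_integral_real_affine) (use a in auto)
  also have "\<dots> = ennreal a * (\<integral>\<^sup>+u. indicator {-1..1} u * g (a * u) \<partial>lborel)"
    using a by (simp add: ind_scale[OF a])
  finally show ?thesis .
qed

lemma fin_le:
  fixes X Z :: ennreal
  assumes "X \<le> Z" "Z = ennreal z"
  shows "X = ennreal (enn2real X)"
  using assms by (metis ennreal_enn2real ennreal_less_top order_le_less_trans infinity_ennreal_def)

lemma key_ineq:
  fixes g :: "real \<Rightarrow> ennreal" and a :: real
  assumes gm[measurable]: "g \<in> borel_measurable borel"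
    and mono: "\<And>s s'. \<bar>s'\<bar> \<le> \<bar>s\<bar> \<Longrightarrow> g s \<le> g s'"
    and a: "0 < a"
  shows "min (a / (4 * enn2real (ennreal (1 / enn2real (\<integral>\<^sup>+s. g s \<partial>lborel)) * (\<integral>\<^sup>+s. ennreal \<bar>s\<bar> * g s \<partial>lborel)))) (1/2)
         \<le> enn2real (ennreal (1 / enn2real (\<integral>\<^sup>+s. g s \<partial>lborel)) * (\<integral>\<^sup>+s. indicator {-a..a} s * g s \<partial>lborel))"
proof -
  define Z where "Z = (\<integral>\<^sup>+s. g s \<partial>lborel)"
  define Zr where "Zr = enn2real Z"
  define Mm where "Mm = (\<integral>\<^sup>+s. ennreal \<bar>s\<bar> * g s \<partial>lborel)"
  define Aa where "Aa = (\<integral>\<^sup>+s. indicator {-a..a} s * g s \<partial>lborel)"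
  have Zr0: "0 \<le> Zr" by (simp add: Zr_def)
  have goal: "min (a / (4 * enn2real (ennreal (1 / Zr) * Mm))) (1/2) \<le> enn2real (ennreal (1 / Zr) * Aa)"
  proof (cases "Zr = 0")
    case True
    then show ?thesis by simp
  next
    case False
    then have Zpos: "0 < Zr" using Zr0 by simp
    have Zfin: "Z = ennreal Zr"
    proof -
      have "Z \<noteq> top" using Zpos by (auto simp: Zr_def)
      then show ?thesis unfolding Zr_def by (simp add: ennreal_enn2real top.not_eq_extremum)
    qed
    have c0: "ennreal (1 / Zr) \<noteq> 0" using Zpos by simp
    show ?thesis
    proof (cases "Mm = top")
      case True
      then have "ennreal (1 / Zr) * Mm = top" using c0 by (simp add: ennreal_mult_top)
      then show ?thesis by simp
    next
      case False
      define Mr where "Mr = enn2real Mm"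
      have Mfin: "Mm = ennreal Mr" unfolding Mr_def using False by (simp add: ennreal_enn2real top.not_eq_extremum)
      have Mr0: "0 \<le> Mr" by (simp add: Mr_def)
      have E: "enn2real (ennreal (1 / Zr) * Mm) = Mr / Zr"
        using Mr0 Zpos by (simp add: Mfin ennreal_mult[symmetric])
      have Aa_le: "Aa \<le> Z" unfolding Aa_def Z_def
        by (intro nn_integral_mono) (auto simp: indicator_def)
      define Ar where "Ar = enn2real Aa"
      have Afin: "Aa = ennreal Ar" unfolding Ar_def by (rule fin_le[OF Aa_le Zfin])
      have Ar0: "0 \<le> Ar" by (simp add: Ar_def)
      have LHS: "enn2real (ennreal (1 / Zr) * Aa) = Ar / Zr"
        using Ar0 Zpos by (simp add: Afin ennreal_mult[symmetric])
      show ?thesis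
      proof (cases "Mr = 0")
        case True
        then show ?thesis unfolding E LHS using Ar0 Zpos by simp
      next
        case False
        then have Mpos: "0 < Mr" using Mr0 by simp
        define t where "t = 2 * Mr / Zr"
        have t: "0 < t" using Mpos Zpos by (simp add: t_def)
        define At where "At = (\<integral>\<^sup>+s. indicator {-t..t} s * g s \<partial>lborel)"
        define Bt where "Bt = (\<integral>\<^sup>+s. indicator (- {-t..t}) s * g s \<partial>lborel)"
        have AB: "At + Bt = Z"
        proof -
          have "At + Bt = (\<integral>\<^sup>+s. indicator {-t..t} s * g s + indicator (- {-t..t}) s * g s \<partial>lborel)"
            unfolding At_def Bt_def by (rule nn_integral_add[symmetric]) simp_all
          also have "\<dots> = Z" unfolding Z_def
            by (intro nn_integral_cong) (simp add: indicator_def)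
          finally show ?thesis .
        qed
        have tB: "ennreal t * Bt \<le> Mm"
        proof -
          have "ennreal t * Bt = (\<integral>\<^sup>+s. ennreal t * (indicator (- {-t..t}) s * g s) \<partial>lborel)"
            unfolding Bt_def by (rule nn_integral_cmult[symmetric]) simp
          also have "\<dots> \<le> Mm" unfolding Mm_def
          proof (rule nn_integral_mono)
            fix s :: real
            show "ennreal t * (indicator (- {-t..t}) s * g s) \<le> ennreal \<bar>s\<bar> * g s"
            proof (cases "s \<in> {-t..t}")
              case False
              then have "t \<le> \<bar>s\<bar>" by auto
              then have "ennreal t \<le> ennreal \<bar>s\<bar>" by (rule ennreal_leI)
              then show ?thesis using False by (simp add: mult_right_mono)
            qed simp
          qed
          finally show ?thesis .
        qed
        have At_le: "At \<le> Z" using AB by (metis le_iff_add)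
        have Bt_le: "Bt \<le> Z" using AB by (metis add.commute le_iff_add)
        define Atr where "Atr = enn2real At"
        define Btr where "Btr = enn2real Bt"
        have Atf: "At = ennreal Atr" unfolding Atr_def by (rule fin_le[OF At_le Zfin])
        have Btf: "Bt = ennreal Btr" unfolding Btr_def by (rule fin_le[OF Bt_le Zfin])
        have Atr0: "0 \<le> Atr" "0 \<le> Btr" by (simp_all add: Atr_def Btr_def)
        have sumr: "Atr + Btr = Zr"
        proof -
          have "ennreal (Atr + Btr) = ennreal Atr + ennreal Btr" by (rule ennreal_plus) (use Atr0 in auto)
          also have "\<dots> = ennreal Zr" using AB Atf Btf Zfin by simp
          finally have e: "ennreal (Atr + Btr) = ennreal Zr" .
          have nn: "0 \<le> Atr + Btr" using Atr0 by simp
          show ?thesis using e ennreal_inj[OF nn Zr0] by blast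
        qed
        have tBr: "t * Btr \<le> Mr"
        proof -
          have "ennreal (t * Btr) \<le> ennreal Mr" using tB t Atr0 by (simp add: Btf Mfin ennreal_mult[symmetric])
          then show ?thesis using Mr0 by (simp add: ennreal_le_iff)
        qed
        have "Btr \<le> Mr / t" using tBr t by (simp add: pos_le_divide_eq mult.commute)
        also have "Mr / t = Zr / 2" using Mpos Zpos by (simp add: t_def)
        finally have Atr_ge: "Zr / 2 \<le> Atr" using sumr by linarith
        show ?thesis
        proof (cases "t \<le> a")
          case True
          have "At \<le> Aa" unfolding At_def Aa_def
            by (intro nn_integral_mono) (use True in \<open>auto simp: indicator_def\<close>)
          then have "Atr \<le> Ar" using Atf Afin Ar0 by (simp add: ennreal_le_iff)
          then have h: "1/2 \<le> Ar / Zr" using Atr_ge Zpos by (simp add: le_divide_eq)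
          show ?thesis unfolding LHS
            using h min.cobounded2[of "a / (4 * enn2real (ennreal (1 / Zr) * Mm))" "1/2"] by linarith
        next
          case False
          then have at: "a < t" by simp
          define Ka where "Ka = (\<integral>\<^sup>+u. indicator {-1..1} u * g (a * u) \<partial>lborel)"
          define Kt where "Kt = (\<integral>\<^sup>+u. indicator {-1..1} u * g (t * u) \<partial>lborel)"
          have AaK: "Aa = ennreal a * Ka" unfolding Aa_def Ka_def by (rule scale_int[OF gm a])
          have AtK: "At = ennreal t * Kt" unfolding At_def Kt_def by (rule scale_int[OF gm t])
          have KK: "Kt \<le> Ka" unfolding Kt_def Ka_def
          proof (rule nn_integral_mono)
            fix u :: real
            show "indicator {-1..1} u * g (t * u) \<le> indicator {-1..1} u * g (a * u)"
            proof (cases "u \<in> {-1..1}")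
              case True
              have "\<bar>a * u\<bar> \<le> \<bar>t * u\<bar>" using a at by (simp add: abs_mult mult_right_mono)
              then show ?thesis using mono by (simp add: mult_left_mono)
            qed simp
          qed
          have "ennreal a * At = ennreal a * ennreal t * Kt" by (simp add: AtK mult.assoc)
          also have "\<dots> \<le> ennreal a * ennreal t * Ka" by (intro mult_left_mono KK) simp
          also have "\<dots> = ennreal t * Aa" by (simp add: AaK mult_ac)
          finally have "ennreal (a * Atr) \<le> ennreal (t * Ar)"
            using a t Atr0 Ar0 by (simp add: Atf Afin ennreal_mult[symmetric])
          then have ineq: "a * Atr \<le> t * Ar" using t Ar0 by (simp add: ennreal_le_iff)
          have "a * (Zr / 2) \<le> a * Atr" using Atr_ge a by simp
          also note ineq
          finally have "a * (Zr / 2) / t \<le> Ar" using t by (simp add: pos_divide_le_eq mult.commute)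
          then have "a * (Zr / 2) / t / Zr \<le> Ar / Zr" by (rule divide_right_mono) (use Zpos in simp)
          moreover have "a / (4 * (Mr / Zr)) = a * (Zr / 2) / t / Zr"
            using Zpos Mpos by (simp add: t_def field_simps)
          ultimately show ?thesis unfolding E LHS by simp
        qed
      qed
    qed
  qed
  then show ?thesis by (simp add: Z_def Zr_def Mm_def Aa_def)
qed


theorem lemma6p5:
  fixes r :: nat and \<Psi> :: "site \<Rightarrow> real \<Rightarrow> real" and \<Lambda> :: "site set"
    and i :: site and a :: real
  assumes "r \<ge> 1" and "admissible_potential r \<Psi>"
    and "a > 0" and "finite \<Lambda>" and "i \<in> \<Lambda>"
  shows "measure (gibbs r \<Psi> \<Lambda> 0) {h \<in> space (gibbs r \<Psi> \<Lambda> 0). \<bar>h i\<bar> \<le> a}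
         \<ge> min (a / (4 * (\<integral>h. \<bar>h i\<bar> \<partial>gibbs r \<Psi> \<Lambda> 0))) (1/2)"
proof -
  note adm = assms(2) and a = assms(3) and fin = assms(4) and iL = assms(5)
  define I where "I = \<Lambda> - {i}"
  have finI: "finite I" using fin by (simp add: I_def)
  have iI: "i \<notin> I" by (simp add: I_def)
  have LI: "\<Lambda> = insert i I" using iL by (auto simp: I_def)
  interpret product_sigma_finite "\<lambda>_::int \<times> int. lborel" by standard
  let ?E = "EE r \<Psi> \<Lambda>"
  let ?P = "PiM \<Lambda> (\<lambda>_::int \<times> int. lborel)"
  let ?g = "gg r \<Psi> \<Lambda> i"
  have mEU: "?E \<in> borel_measurable MU" by (rule EE_meas[OF adm])
  have Erestr: "(\<lambda>h. ?E (mrg \<Lambda> (\<lambda>_. 0) h)) = ?E"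
    by (rule ext, rule EE_cong) (simp add: mrg_def)
  have mE[measurable]: "?E \<in> borel_measurable ?P"
    using measurable_compose[OF meas_mrg mEU, of \<Lambda> "\<lambda>_. 0"] unfolding Erestr by simp
  have Epos: "0 < ?E h" for h by (simp add: EE_def)
  have Fub: "(\<integral>\<^sup>+h. \<psi> (h i) * ennreal (?E h) \<partial>?P) = (\<integral>\<^sup>+s. \<psi> s * ?g s \<partial>lborel)"
    if [measurable]: "\<psi> \<in> borel_measurable borel" for \<psi> :: "real \<Rightarrow> ennreal"
  proof -
    have m: "(\<lambda>h. \<psi> (h i) * ennreal (?E h)) \<in> borel_measurable (PiM (insert i I) (\<lambda>_. lborel))"
      using mE unfolding LI by measurable
    have "(\<integral>\<^sup>+h. \<psi> (h i) * ennreal (?E h) \<partial>?P)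
        = (\<integral>\<^sup>+h. \<psi> (h i) * ennreal (?E h) \<partial>PiM (insert i I) (\<lambda>_. lborel))" using LI by simp
    also have "\<dots> = (\<integral>\<^sup>+s. (\<integral>\<^sup>+y. \<psi> ((y(i := s)) i) * ennreal (?E (y(i := s))) \<partial>PiM I (\<lambda>_. lborel)) \<partial>lborel)"
      by (rule product_nn_integral_insert_rev[OF finI iI m])
    also have "\<dots> = (\<integral>\<^sup>+s. \<psi> s * ?g s \<partial>lborel)"
    proof (rule nn_integral_cong)
      fix s :: real
      have eq: "?E (y(i := s)) = ?E (mrg I (\<lambda>k. if k = i then s else 0) y)" for y
        by (rule EE_cong) (auto simp: mrg_def I_def)
      have mm: "(\<lambda>y. ennreal (?E (mrg I (\<lambda>k. if k = i then s else 0) y))) \<in> borel_measurable (PiM I (\<lambda>_. lborel))"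
        using measurable_compose[OF meas_mrg mEU] by simp
      have "(\<integral>\<^sup>+y. \<psi> ((y(i := s)) i) * ennreal (?E (y(i := s))) \<partial>PiM I (\<lambda>_. lborel))
          = (\<integral>\<^sup>+y. \<psi> s * ennreal (?E (mrg I (\<lambda>k. if k = i then s else 0) y)) \<partial>PiM I (\<lambda>_. lborel))"
        by (simp add: eq)
      also have "\<dots> = \<psi> s * ?g s"
        unfolding gg_def I_def[symmetric] by (rule nn_integral_cmult[OF mm])
      finally show "(\<integral>\<^sup>+y. \<psi> ((y(i := s)) i) * ennreal (?E (y(i := s))) \<partial>PiM I (\<lambda>_. lborel)) = \<psi> s * ?g s" .
    qed
    finally show ?thesis .
  qed
  define Zr where "Zr = enn2real (\<integral>\<^sup>+s. ?g s \<partial>lborel)"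
  have Zr0: "0 \<le> Zr" by (simp add: Zr_def)
  have pf: "partition_fn r \<Psi> \<Lambda> 0 = Zr"
  proof -
    have "partition_fn r \<Psi> \<Lambda> 0 = (\<integral>h. ?E h \<partial>?P)"
      by (simp add: partition_fn_def EE_def ref_measure_def)
    also have "\<dots> = enn2real (\<integral>\<^sup>+h. ennreal (?E h) \<partial>?P)"
      by (rule integral_eq_nn_integral) (use Epos in \<open>auto intro: less_imp_le\<close>)
    also have "(\<integral>\<^sup>+h. ennreal (?E h) \<partial>?P) = (\<integral>\<^sup>+s. ?g s \<partial>lborel)"
      using Fub[of "\<lambda>_. 1"] by simp
    finally show ?thesis by (simp add: Zr_def)
  qed
  define f where "f h = ennreal (?E h / Zr)" for h
  have mf[measurable]: "f \<in> borel_measurable ?P" unfolding f_def[abs_def] by measurable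
  have fsplit: "f h = ennreal (1 / Zr) * ennreal (?E h)" for h
    unfolding f_def using Zr0 Epos[of h] by (simp add: ennreal_mult[symmetric])
  have gibbs: "gibbs r \<Psi> \<Lambda> 0 = density ?P f"
    by (simp add: gibbs_def pf f_def[abs_def] EE_def ref_measure_def)
  define X where "X = {h \<in> space ?P. \<bar>h i\<bar> \<le> a}"
  have X[measurable]: "X \<in> sets ?P" unfolding X_def using iL by measurable
  have LHS: "measure (gibbs r \<Psi> \<Lambda> 0) {h \<in> space (gibbs r \<Psi> \<Lambda> 0). \<bar>h i\<bar> \<le> a}
      = enn2real (ennreal (1 / Zr) * (\<integral>\<^sup>+s. indicator {-a..a} s * ?g s \<partial>lborel))"
  proof -
    have "{h \<in> space (gibbs r \<Psi> \<Lambda> 0). \<bar>h i\<bar> \<le> a} = X" by (simp add: gibbs X_def)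
    then have "measure (gibbs r \<Psi> \<Lambda> 0) {h \<in> space (gibbs r \<Psi> \<Lambda> 0). \<bar>h i\<bar> \<le> a}
        = enn2real (\<integral>\<^sup>+h. f h * indicator X h \<partial>?P)"
      by (simp add: gibbs measure_def emeasure_density)
    also have "(\<integral>\<^sup>+h. f h * indicator X h \<partial>?P)
        = (\<integral>\<^sup>+h. ennreal (1 / Zr) * (indicator {-a..a} (h i) * ennreal (?E h)) \<partial>?P)"
      by (rule nn_integral_cong) (auto simp: fsplit X_def indicator_def abs_le_iff)
    also have "\<dots> = ennreal (1 / Zr) * (\<integral>\<^sup>+h. indicator {-a..a} (h i) * ennreal (?E h) \<partial>?P)"
    proof (rule nn_integral_cmult)
      have mi: "(\<lambda>h. h i) \<in> borel_measurable ?P" using iL by measurable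
      show "(\<lambda>h. indicator {-a..a} (h i) * ennreal (?E h)) \<in> borel_measurable ?P"
        using mi by measurable
    qed
    also have "(\<integral>\<^sup>+h. indicator {-a..a} (h i) * ennreal (?E h) \<partial>?P)
        = (\<integral>\<^sup>+s. indicator {-a..a} s * ?g s \<partial>lborel)"
      by (rule Fub) measurable
    finally show ?thesis .
  qed
  have RHS: "(\<integral>h. \<bar>h i\<bar> \<partial>gibbs r \<Psi> \<Lambda> 0)
      = enn2real (ennreal (1 / Zr) * (\<integral>\<^sup>+s. ennreal \<bar>s\<bar> * ?g s \<partial>lborel))"
  proof -
    have mi0: "(\<lambda>h::site \<Rightarrow> real. h i) \<in> borel_measurable ?P" using iL by measurable
    have mi: "(\<lambda>h::site \<Rightarrow> real. \<bar>h i\<bar>) \<in> borel_measurable ?P" by (rule borel_measurable_abs[OF mi0])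
    have "(\<integral>h. \<bar>h i\<bar> \<partial>gibbs r \<Psi> \<Lambda> 0) = enn2real (\<integral>\<^sup>+h. ennreal \<bar>h i\<bar> \<partial>density ?P f)"
      unfolding gibbs
    proof (rule integral_eq_nn_integral)
      show "(\<lambda>h. \<bar>h i\<bar>) \<in> borel_measurable (density ?P f)"
        unfolding measurable_density_eq1 by (rule mi)
    qed simp
    also have "(\<integral>\<^sup>+h. ennreal \<bar>h i\<bar> \<partial>density ?P f) = (\<integral>\<^sup>+h. f h * ennreal \<bar>h i\<bar> \<partial>?P)"
      by (rule nn_integral_density) (use mi in simp_all)
    also have "\<dots> = (\<integral>\<^sup>+h. ennreal (1 / Zr) * (ennreal \<bar>h i\<bar> * ennreal (?E h)) \<partial>?P)"
      by (rule nn_integral_cong) (simp add: fsplit mult_ac)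
    also have "\<dots> = ennreal (1 / Zr) * (\<integral>\<^sup>+h. ennreal \<bar>h i\<bar> * ennreal (?E h) \<partial>?P)"
      by (rule nn_integral_cmult) (use mi in measurable)
    also have "(\<integral>\<^sup>+h. ennreal \<bar>h i\<bar> * ennreal (?E h) \<partial>?P)
        = (\<integral>\<^sup>+s. ennreal \<bar>s\<bar> * ?g s \<partial>lborel)"
      by (rule Fub) measurable
    finally show ?thesis .
  qed
  show ?thesis unfolding LHS RHS Zr_def
    by (rule key_ineq[OF gg_meas[OF adm fin] gg_mono[OF adm fin] a])
qed

end
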